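(* Assume $s=d$. There exists a constant $c_1>0$ such that, with probability tending to $1$ as $n\to\infty$, $X^{(n)}$ does not contain a toroidal descending chain consisting of more than $c_1\log n$ elements.
   Context: Fix an integer $d\ge2$. For $n\ge1$, $\mathbb{T}_n$ is the torus obtained from $[-n/2,n/2]^d$ by identifying opposite faces, with toroidal distance ${\rm d}_{\mathbb{T}_n}$ and $B^{\mathbb{T}_n}_r(\xi)=\{\eta\in\mathbb{T}_n:{\rm d}_{\mathbb{T}_n}(\xi,\eta)\le r\}$. $R$ is a nonnegative random variable with absolutely continuous distribution such that $\lim_{h\to\infty}h^s\mathbb{P}(R>h)=\beta$ for some $\beta,s\in(0,\infty)$. $X^{(n)}$ is a homogeneous Poisson point process of intensity $1$ on $\mathbb{T}_n$, each point independently marked with a mark in $[0,\infty)$ distributed as $R$ (points written $(\xi,r)$). Points $x_1=(\xi_1,r_1),\dots,x_m=(\xi_m,r_m)$ form a toroidal descending chain if $r_1>r_2>\dots>r_m$ and $\xi_{i+1}\in B^{\mathbb{T}_n}_{r_i}(\xi_i)$ for all $i\in\{1,\dots,m-1\}$. *)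

theory Defs
  imports "HOL-Probability.Probability"
begin

definition torus_dist :: "real \<Rightarrow> real^'d \<Rightarrow> real^'d \<Rightarrow> real" where
  "torus_dist L x y = (INF k\<in>{k::real^'d. \<forall>i. k$i \<in> \<int>}. dist x (y + L *\<^sub>R k))"

definition torus_box :: "real \<Rightarrow> (real^'d) set" where
  "torus_box L = {x. \<forall>i. - L / 2 \<le> x$i \<and> x$i < L / 2}"

definition mark_point_law :: "real \<Rightarrow> real measure \<Rightarrow> ((real^'d) \<times> real) measure" where
  "mark_point_law L \<mu> = uniform_measure lborel (torus_box L) \<Otimes>\<^sub>M \<mu>"

text \<open>Among the k marked points f 0, ..., f (k-1) there is a toroidal descending
chain of m elements (strict decrease of marks forces distinct points).\<close>
definition has_desc_chain :: "real \<Rightarrow> (nat \<Rightarrow> (real^'d) \<times> real) \<Rightarrow> nat \<Rightarrow> nat \<Rightarrow> bool" where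
  "has_desc_chain L f k m \<longleftrightarrow>
     (\<exists>js. length js = m \<and> set js \<subseteq> {..<k} \<and>
        (\<forall>i. Suc i < m \<longrightarrow>
           snd (f (js ! Suc i)) < snd (f (js ! i)) \<and>
           torus_dist L (fst (f (js ! i))) (fst (f (js ! Suc i))) \<le> snd (f (js ! i))))"

text \<open>The process is realised in the standard way: the number of points is Poisson with
mean vol(T_n) = n^d, and given k points they are i.i.d. with law mark_point_law.\<close>
definition prob_long_chain :: "('d::finite) itself \<Rightarrow> real measure \<Rightarrow> nat \<Rightarrow> real \<Rightarrow> real" where
  "prob_long_chain _ \<mu> n c =
     (\<Sum>k. exp (- (real n ^ CARD('d))) * (real n ^ CARD('d)) ^ k / fact k *
        measure (PiM {..<k} (\<lambda>_. mark_point_law (real n) \<mu> :: ((real^'d) \<times> real) measure))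
          {f \<in> space (PiM {..<k} (\<lambda>_. mark_point_law (real n) \<mu> :: ((real^'d) \<times> real) measure)).
             \<exists>m. real m > c * ln (real n) \<and> has_desc_chain (real n) f k m})"

end

theory Submission
  imports Defs
begin

lemma Basis_cart_range: "(Basis :: (real^'d::finite) set) = range (\<lambda>i. axis i 1)"
  by (auto simp: Basis_vec_def)

lemma prod_Basis_cart: "(\<Prod>b\<in>(Basis::(real^'d::finite) set). v \<bullet> b) = (\<Prod>i\<in>UNIV. v$i)"
proof -
  have "inj (\<lambda>i::'d. axis i (1::real))" by (auto simp: inj_def axis_eq_axis)
  then show ?thesis unfolding Basis_cart_range
    by (subst prod.reindex) (auto simp: inner_axis)
qed

lemma emeasure_cbox_cart:
  assumes "\<And>i. (a::real^'d::finite)$i \<le> b$i"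
  shows "emeasure lborel (cbox a b) = ennreal (\<Prod>i\<in>UNIV. b$i - a$i)"
proof -
  have "\<And>c. c \<in> Basis \<Longrightarrow> a \<bullet> c \<le> b \<bullet> c" using assms by (auto simp: Basis_cart_range inner_axis)
  then show ?thesis using prod_Basis_cart[of "b - a"] by simp
qed

lemma emeasure_box_cart:
  assumes "\<And>i. (a::real^'d::finite)$i \<le> b$i"
  shows "emeasure lborel (box a b) = ennreal (\<Prod>i\<in>UNIV. b$i - a$i)"
proof -
  have "\<And>c. c \<in> Basis \<Longrightarrow> a \<bullet> c \<le> b \<bullet> c" using assms by (auto simp: Basis_cart_range inner_axis)
  then show ?thesis using prod_Basis_cart[of "b - a"] by simp
qed

lemma torus_box_sets[measurable]: "torus_box L \<in> sets (borel :: (real^'d::finite) measure)"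
  unfolding torus_box_def by measurable

lemma emeasure_torus_box:
  assumes "L > 0"
  shows "emeasure lborel (torus_box L :: (real^'d::finite) set) = ennreal (L ^ CARD('d))"
proof (rule antisym)
  let ?a = "(\<chi> i. - L/2) :: real^'d" and ?b = "(\<chi> i. L/2) :: real^'d"
  have "torus_box L \<subseteq> cbox ?a ?b"
    by (auto simp: torus_box_def mem_box_cart less_imp_le)
  hence "emeasure lborel (torus_box L :: (real^'d::finite) set) \<le> emeasure lborel (cbox ?a ?b)"
    by (intro emeasure_mono) auto
  also have "\<dots> = ennreal (L ^ CARD('d))"
    using assms by (subst emeasure_cbox_cart) auto
  finally show "emeasure lborel (torus_box L :: (real^'d::finite) set) \<le> ennreal (L ^ CARD('d))" .
  have "box ?a ?b \<subseteq> torus_box L"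
    by (auto simp: torus_box_def mem_box_cart less_imp_le)
  hence "emeasure lborel (box ?a ?b) \<le> emeasure lborel (torus_box L :: (real^'d::finite) set)"
    by (intro emeasure_mono) auto
  moreover have "emeasure lborel (box ?a ?b) = ennreal (L ^ CARD('d))"
    using assms by (subst emeasure_box_cart) auto
  ultimately show "ennreal (L ^ CARD('d)) \<le> emeasure lborel (torus_box L :: (real^'d::finite) set)" by simp
qed

lemma prob_space_U:
  assumes "L > 0"
  shows "prob_space (uniform_measure lborel (torus_box L :: (real^'d::finite) set))"
  using assms by (intro prob_space_uniform_measure) (auto simp: emeasure_torus_box)


lemma borel_measurable_vec_nth'[measurable (raw)]:
  "f \<in> borel_measurable M \<Longrightarrow> (\<lambda>x. (f x :: real^'d::finite) $ i) \<in> borel_measurable M"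
  by (rule measurable_compose[where f=f]) (auto intro!: borel_measurable_continuous_onI continuous_intros)

definition close :: "real \<Rightarrow> real^'d::finite \<Rightarrow> real^'d \<Rightarrow> real \<Rightarrow> bool" where
  "close L x y \<rho> \<longleftrightarrow> (\<forall>i. \<exists>j::int. \<bar>x$i - y$i - L * of_int j\<bar> \<le> \<rho>)"

lemma pred_close[measurable]:
  assumes [measurable]: "f \<in> borel_measurable M" "g \<in> borel_measurable M" "h \<in> borel_measurable M"
  shows "Measurable.pred M (\<lambda>\<omega>. close L (f \<omega>) (g \<omega>) (h \<omega>))"
proof -
  have "Measurable.pred M (\<lambda>\<omega>. \<forall>i\<in>UNIV. \<exists>j::int. \<bar>f \<omega> $ i - g \<omega> $ i - L * of_int j\<bar> \<le> h \<omega>)"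
    by measurable
  thus ?thesis unfolding close_def by simp
qed

definition gfun :: "nat \<Rightarrow> real \<Rightarrow> real \<Rightarrow> real" where
  "gfun d L \<rho> = min 1 ((6*\<rho>/L)^d)"

lemma close_vol:
  fixes a :: "real^'d::finite"
  assumes L: "L > 0" and r: "0 \<le> \<rho>" "2*\<rho> \<le> L"
  shows "emeasure lborel (torus_box L \<inter> {y. close L a y \<rho>}) \<le> ennreal ((6*\<rho>)^CARD('d))"
proof -
  define j0 where "j0 i = \<lceil>(a$i - L/2 - \<rho>)/L\<rceil>" for i
  define K where "K = PiE (UNIV::'d set) (\<lambda>_. {0,1,2::int})"
  define c where "c \<kappa> = (\<chi> i. a$i - L * of_int (j0 i + \<kappa> i))" for \<kappa> :: "'d \<Rightarrow> int"
  define B where "B \<kappa> = cbox ((\<chi> i. c \<kappa> $ i - \<rho>)::real^'d) (\<chi> i. c \<kappa> $ i + \<rho>)" for \<kappa>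
  have fin: "finite K" unfolding K_def by (intro finite_PiE) auto
  have cardK: "card K = 3 ^ CARD('d)" unfolding K_def by (simp add: card_PiE numeral_3_eq_3)
  have sub: "torus_box L \<inter> {y. close L a y \<rho>} \<subseteq> (\<Union>\<kappa>\<in>K. B \<kappa>)"
  proof
    fix y assume y: "y \<in> torus_box L \<inter> {y. close L a y \<rho>}"
    then have "\<forall>i. \<exists>j::int. \<bar>a$i - y$i - L * of_int j\<bar> \<le> \<rho>" by (auto simp: close_def)
    then obtain J where J: "\<And>i. \<bar>a$i - y$i - L * of_int (J i)\<bar> \<le> \<rho>" by metis
    have yb: "\<And>i. - L/2 \<le> y$i \<and> y$i < L/2" using y by (auto simp: torus_box_def)
    have lo: "j0 i \<le> J i" for i
    proof -
      have "L * of_int (J i) > a$i - L/2 - \<rho>" using J[of i] yb[of i] by (auto simp: abs_le_iff)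
      hence "of_int (J i) > (a$i - L/2 - \<rho>)/L" using L by (simp add: field_simps)
      thus ?thesis unfolding j0_def by (simp add: ceiling_le_iff less_imp_le)
    qed
    have hi: "J i \<le> j0 i + 2" for i
    proof -
      have "L * of_int (J i) \<le> a$i + L/2 + \<rho>" using J[of i] yb[of i] by (auto simp: abs_le_iff)
      hence "of_int (J i) \<le> (a$i - L/2 - \<rho>)/L + 2" using L r by (simp add: field_simps)
      moreover have "(a$i - L/2 - \<rho>)/L \<le> of_int (j0 i)" unfolding j0_def by simp
      ultimately have "of_int (J i) \<le> (of_int (j0 i + 2) :: real)" by simp
      thus ?thesis by linarith
    qed
    define \<kappa> where "\<kappa> i = J i - j0 i" for i
    have "\<kappa> \<in> K" unfolding K_def \<kappa>_def using lo hi
      by (auto simp: PiE_def extensional_def) (smt (verit))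
    moreover have "c \<kappa> $ i - \<rho> \<le> y$i \<and> y$i \<le> c \<kappa> $ i + \<rho>" for i
      using J[of i] unfolding c_def \<kappa>_def by (simp add: abs_le_iff algebra_simps)
    hence "y \<in> B \<kappa>" unfolding B_def by (auto simp: mem_box_cart)
    ultimately show "y \<in> (\<Union>\<kappa>\<in>K. B \<kappa>)" by blast
  qed
  have "emeasure lborel (torus_box L \<inter> {y. close L a y \<rho>}) \<le> emeasure lborel (\<Union>\<kappa>\<in>K. B \<kappa>)"
    using sub by (intro emeasure_mono) (auto simp: B_def)
  also have "\<dots> \<le> (\<Sum>\<kappa>\<in>K. emeasure lborel (B \<kappa>))"
    using fin by (intro emeasure_subadditive_finite) (auto simp: B_def)
  also have "\<dots> = (\<Sum>\<kappa>\<in>K. ennreal ((2*\<rho>)^CARD('d)))"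
    using r by (intro sum.cong refl) (simp add: B_def emeasure_cbox_cart)
  also have "\<dots> = ennreal ((6*\<rho>)^CARD('d))"
    using r by (simp add: cardK ennreal_of_nat_eq_real_of_nat ennreal_mult'[symmetric] power_mult_distrib flip: power_mult_distrib[of "3::real" 2])
  finally show ?thesis .
qed


locale chainsetup =
  fixes L :: real and \<mu> :: "real measure"
  assumes Lpos: "L > 0" and mu_prob: "prob_space \<mu>" and mu_sets: "sets \<mu> = sets borel"
begin

abbreviation U :: "(real^'d::finite) measure" where "U \<equiv> uniform_measure lborel (torus_box L)"
abbreviation Q :: "((real^'d::finite) \<times> real) measure" where "Q \<equiv> mark_point_law L \<mu>"

lemma U_prob: "prob_space (U :: (real^'d::finite) measure)"
  using prob_space_U[OF Lpos] .

lemma Q_prob: "prob_space (Q :: ((real^'d::finite) \<times> real) measure)"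
  unfolding mark_point_law_def
  by (intro prob_space_pair U_prob mu_prob)

lemma sets_U: "sets (U :: (real^'d::finite) measure) = sets borel" by simp

lemma sets_Q: "sets (Q :: ((real^'d::finite) \<times> real) measure) = sets (borel \<Otimes>\<^sub>M borel)"
  unfolding mark_point_law_def by (intro sets_pair_measure_cong) (simp_all add: mu_sets)

lemma U_close:
  fixes a :: "real^'d::finite"
  shows "emeasure U {y. close L a y \<rho>} \<le> ennreal (gfun CARD('d) L \<rho>)"
proof (cases "\<rho> < 0")
  case True
  hence "{y. close L a y \<rho>} = {}" by (auto simp: close_def)
  thus ?thesis by simp
next
  case False
  hence assms: "0 \<le> \<rho>" by simp
  interpret U: prob_space "U :: (real^'d) measure" by (rule U_prob)
  have meas: "{y. close L a y \<rho>} \<in> sets (borel :: (real^'d) measure)"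
  proof -
    have "Measurable.pred borel (\<lambda>y::real^'d. close L a y \<rho>)" by measurable
    thus ?thesis by (simp add: pred_def)
  qed
  have le1: "emeasure U {y. close L a y \<rho>} \<le> 1" by (rule U.emeasure_le_1)
  show ?thesis
  proof (cases "2*\<rho> \<le> L")
    case True
    have "emeasure U {y. close L a y \<rho>} = emeasure lborel (torus_box L \<inter> {y. close L a y \<rho>}) / emeasure lborel (torus_box L :: (real^'d) set)"
      using meas by (subst emeasure_uniform_measure) auto
    also have "\<dots> \<le> ennreal ((6*\<rho>)^CARD('d)) / ennreal (L^CARD('d))"
      unfolding emeasure_torus_box[OF Lpos]
      by (intro divide_right_mono_ennreal close_vol Lpos assms True)
    also have "\<dots> = ennreal ((6*\<rho>/L)^CARD('d))"
      using Lpos assms by (simp add: divide_ennreal power_divide)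
    finally have "emeasure U {y. close L a y \<rho>} \<le> ennreal ((6*\<rho>/L)^CARD('d))" .
    with le1 show ?thesis unfolding gfun_def
      by (simp add: min_def)
  next
    case False
    have "1 \<le> 6*\<rho>/L" using False Lpos by (simp add: field_simps)
    hence "1 \<le> (6*\<rho>/L)^CARD('d)" by (simp add: one_le_power)
    hence "gfun CARD('d) L \<rho> = 1" by (simp add: gfun_def)
    with le1 show ?thesis by simp
  qed
qed

end

definition W :: "real \<Rightarrow> nat list \<Rightarrow> (nat \<Rightarrow> (real^'d::finite) \<times> real) \<Rightarrow> bool" where
  "W L js f \<longleftrightarrow> (\<forall>i\<in>{..<length js - 1}. snd (f (js!Suc i)) < snd (f (js!i)) \<and>
       close L (fst (f (js!i))) (fst (f (js!Suc i))) (snd (f (js!i)) + 1))"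

definition Dc :: "nat list \<Rightarrow> (nat \<Rightarrow> (real^'d::finite) \<times> real) \<Rightarrow> bool" where
  "Dc js f \<longleftrightarrow> (\<forall>i\<in>{..<length js - 1}. snd (f (js!Suc i)) < snd (f (js!i)))"

definition Gp :: "real \<Rightarrow> nat list \<Rightarrow> (nat \<Rightarrow> (real^'d::finite) \<times> real) \<Rightarrow> ennreal" where
  "Gp L js f = (\<Prod>i\<in>{..<length js - 1}. ennreal (gfun CARD('d) L (snd (f (js!i)) + 1)))"

lemma W_cong: "(\<And>k. k \<in> set js \<Longrightarrow> f k = g k) \<Longrightarrow> W L js f = W L js g"
  unfolding W_def by (intro ball_cong refl) (auto simp: nth_mem)

lemma Dc_cong: "(\<And>k. k \<in> set js \<Longrightarrow> f k = g k) \<Longrightarrow> Dc js f = Dc js g"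
  unfolding Dc_def by (intro ball_cong refl) (auto simp: nth_mem)

lemma Gp_cong: "(\<And>k. k \<in> set js \<Longrightarrow> f k = g k) \<Longrightarrow> Gp L js f = Gp L js g"
  unfolding Gp_def by (intro prod.cong refl) (auto simp: nth_mem)

lemma snoc_split: "bl \<noteq> [] \<Longrightarrow> (\<forall>i\<in>{..<length (bl@[j]) - 1}. P ((bl@[j])!i) ((bl@[j])!Suc i))
   \<longleftrightarrow> (\<forall>i\<in>{..<length bl - 1}. P (bl!i) (bl!Suc i)) \<and> P (last bl) j"
proof -
  assume ne: "bl \<noteq> []"
  have A: "{..<length (bl@[j]) - 1} = insert (length bl - 1) {..<length bl - 1}" using ne
    by (cases bl) auto
  have "(bl@[j])!(length bl - 1) = last bl" using ne by (simp add: nth_append last_conv_nth)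
  moreover have "(bl@[j])!Suc (length bl - 1) = j" using ne by (simp add: nth_append)
  moreover have "\<And>i. i < length bl - 1 \<Longrightarrow> (bl@[j])!i = bl!i \<and> (bl@[j])!Suc i = bl!Suc i"
    by (auto simp: nth_append)
  ultimately show ?thesis unfolding A by auto
qed

lemma W_snoc: "bl \<noteq> [] \<Longrightarrow> W L (bl@[j]) f \<longleftrightarrow> W L bl f \<and> snd (f j) < snd (f (last bl)) \<and>
   close L (fst (f (last bl))) (fst (f j)) (snd (f (last bl)) + 1)"
  unfolding W_def using snoc_split[where P="\<lambda>a b. snd (f b) < snd (f a) \<and> close L (fst (f a)) (fst (f b)) (snd (f a) + 1)"]
  by simp

lemma Dc_snoc: "bl \<noteq> [] \<Longrightarrow> Dc (bl@[j]) f \<longleftrightarrow> Dc bl f \<and> snd (f j) < snd (f (last bl))"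
  unfolding Dc_def using snoc_split[where P="\<lambda>a b. snd (f b) < snd (f a)"]
  by simp

lemma Gp_snoc: fixes f :: "nat \<Rightarrow> (real^'d::finite) \<times> real" shows "bl \<noteq> [] \<Longrightarrow> Gp L (bl@[j]) f = Gp L bl f * ennreal (gfun CARD('d) L (snd (f (last bl)) + 1))"
proof -
  assume ne: "bl \<noteq> []"
  have A: "{..<length (bl@[j]) - 1} = insert (length bl - 1) {..<length bl - 1}" using ne
    by (cases bl) auto
  have "(bl@[j])!(length bl - 1) = last bl" using ne by (simp add: nth_append last_conv_nth)
  moreover have "\<And>i. i \<in> {..<length bl - 1} \<Longrightarrow> (bl@[j])!i = bl!i"
    by (auto simp: nth_append)
  ultimately show ?thesis unfolding Gp_def A
    by (subst prod.insert) (auto simp: mult.commute intro!: prod.cong)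
qed


abbreviation B2 :: "((real^'d::finite) \<times> real) measure" where "B2 \<equiv> borel \<Otimes>\<^sub>M borel"

lemma meas_W:
  assumes "set js \<subseteq> I"
  shows "Measurable.pred (PiM I (\<lambda>_. B2 :: ((real^'d::finite) \<times> real) measure)) (W L js)"
  unfolding W_def
proof (rule pred_intros_finite(3))
  fix i assume i: "i \<in> {..<length js - 1}"
  hence "js!i \<in> I" "js!Suc i \<in> I" using assms by (auto simp: subset_iff nth_mem)
  note [measurable] = measurable_component_singleton[OF this(1), of "\<lambda>_. B2"]
                      measurable_component_singleton[OF this(2), of "\<lambda>_. B2"]
  show "Measurable.pred (PiM I (\<lambda>_. B2 :: ((real^'d::finite) \<times> real) measure))
     (\<lambda>x. snd (x (js ! Suc i)) < snd (x (js ! i)) \<and> close L (fst (x (js ! i))) (fst (x (js ! Suc i))) (snd (x (js ! i)) + 1))"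
    by measurable
qed simp

lemma meas_Dc:
  assumes "set js \<subseteq> I"
  shows "Measurable.pred (PiM I (\<lambda>_. B2 :: ((real^'d::finite) \<times> real) measure)) (Dc js)"
  unfolding Dc_def
proof (rule pred_intros_finite(3))
  fix i assume i: "i \<in> {..<length js - 1}"
  hence "js!i \<in> I" "js!Suc i \<in> I" using assms by (auto simp: subset_iff nth_mem)
  note [measurable] = measurable_component_singleton[OF this(1), of "\<lambda>_. B2"]
                      measurable_component_singleton[OF this(2), of "\<lambda>_. B2"]
  show "Measurable.pred (PiM I (\<lambda>_. B2 :: ((real^'d::finite) \<times> real) measure))
     (\<lambda>x. snd (x (js ! Suc i)) < snd (x (js ! i)))"
    by measurable
qed simp

lemma gfun_measurable[measurable]: "(\<lambda>x. gfun d L x) \<in> borel_measurable borel"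
  unfolding gfun_def by measurable

lemma meas_Gp:
  assumes "set js \<subseteq> I"
  shows "Gp L js \<in> borel_measurable (PiM I (\<lambda>_. B2 :: ((real^'d::finite) \<times> real) measure))"
  unfolding Gp_def
proof (rule borel_measurable_prod_ennreal)
  fix i assume i: "i \<in> {..<length js - 1}"
  hence "js!i \<in> I" using assms by (auto simp: subset_iff nth_mem)
  note [measurable] = measurable_component_singleton[OF this(1), of "\<lambda>_. B2"]
  show "(\<lambda>x. ennreal (gfun CARD('d) L (snd (x (js ! i)) + 1))) \<in> borel_measurable (PiM I (\<lambda>_. B2 :: ((real^'d::finite) \<times> real) measure))"
    by measurable
qed

lemma meas_last:
  assumes "js \<noteq> []" "set js \<subseteq> I" "\<phi> \<in> borel_measurable borel"
  shows "(\<lambda>f. \<phi> (snd (f (last js)))) \<in> borel_measurable (PiM I (\<lambda>_. B2 :: ((real^'d::finite) \<times> real) measure))"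
proof -
  have "last js \<in> I" using assms by auto
  note [measurable] = measurable_component_singleton[OF this, of "\<lambda>_. B2"] assms(3)
  show ?thesis by measurable
qed


context chainsetup begin

lemma PQ_psf: "product_sigma_finite (\<lambda>_::nat. Q :: ((real^'d::finite) \<times> real) measure)"
  unfolding product_sigma_finite_def using Q_prob by (auto intro: prob_space_imp_sigma_finite)

lemma sets_PQ: "sets (PiM I (\<lambda>_. Q :: ((real^'d::finite) \<times> real) measure)) = sets (PiM I (\<lambda>_. B2))"
  by (intro sets_PiM_cong) (simp_all add: sets_Q)

lemma meas_PQ: "f \<in> borel_measurable (PiM I (\<lambda>_. B2 :: ((real^'d::finite) \<times> real) measure)) \<Longrightarrow>
   f \<in> borel_measurable (PiM I (\<lambda>_. Q :: ((real^'d::finite) \<times> real) measure))"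
  using measurable_cong_sets[OF sets_PQ refl] by blast

lemma Q_factor:
  assumes [measurable]: "F \<in> borel_measurable (borel :: (real^'d::finite) measure)" "G \<in> borel_measurable borel"
  shows "(\<integral>\<^sup>+y. F (fst y) * G (snd y) \<partial>(Q :: ((real^'d::finite) \<times> real) measure)) = (\<integral>\<^sup>+u. F u \<partial>U) * (\<integral>\<^sup>+t. G t \<partial>\<mu>)"
proof -
  interpret mu: prob_space \<mu> by (rule mu_prob)
  have sU: "sets (U :: (real^'d) measure) = sets borel" by simp
  have "(\<lambda>y. F (fst y) * G (snd y)) \<in> borel_measurable (B2 :: ((real^'d) \<times> real) measure)" by measurable
  hence m: "(\<lambda>y. F (fst y) * G (snd y)) \<in> borel_measurable (U \<Otimes>\<^sub>M \<mu>)"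
    using measurable_cong_sets[OF sets_pair_measure_cong[OF sU mu_sets] refl] by blast
  have mG: "G \<in> borel_measurable \<mu>" by (subst measurable_cong_sets[OF mu_sets refl]) (rule assms(2))
  have mF: "F \<in> borel_measurable U" using measurable_cong_sets[OF sU refl] by auto
  have "(\<integral>\<^sup>+y. F (fst y) * G (snd y) \<partial>Q) = (\<integral>\<^sup>+x. \<integral>\<^sup>+t. F (fst (x,t)) * G (snd (x,t)) \<partial>\<mu> \<partial>U)"
    unfolding mark_point_law_def by (rule mu.nn_integral_fst[OF m, symmetric])
  also have "\<dots> = (\<integral>\<^sup>+x. F x * (\<integral>\<^sup>+t. G t \<partial>\<mu>) \<partial>U)"
    by (simp add: nn_integral_cmult[OF mG])
  also have "\<dots> = (\<integral>\<^sup>+u. F u \<partial>U) * (\<integral>\<^sup>+t. G t \<partial>\<mu>)"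
    by (rule nn_integral_multc[OF mF])
  finally show ?thesis .
qed

definition psi :: "(real \<Rightarrow> ennreal) \<Rightarrow> real \<Rightarrow> ennreal" where
  "psi \<phi> r = (\<integral>\<^sup>+t. (if t < r then \<phi> t else 0) \<partial>\<mu>)"

lemma psi_meas:
  assumes [measurable]: "\<phi> \<in> borel_measurable borel"
  shows "psi \<phi> \<in> borel_measurable borel"
proof -
  interpret mu: prob_space \<mu> by (rule mu_prob)
  have "(\<lambda>(r,t). (if t < r then \<phi> t else 0)) \<in> borel_measurable (borel \<Otimes>\<^sub>M (borel :: real measure))"
    by measurable
  hence "(\<lambda>(r,t). (if t < r then \<phi> t else 0)) \<in> borel_measurable (borel \<Otimes>\<^sub>M \<mu>)"
    using measurable_cong_sets[OF sets_pair_measure_cong[OF refl mu_sets] refl] by blast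
  thus ?thesis unfolding psi_def by (rule mu.borel_measurable_nn_integral)
qed

end

context chainsetup begin

lemma U_close_int:
  fixes a :: "real^'d::finite"
  shows "(\<integral>\<^sup>+u. indicator {y. close L a y \<rho>} u \<partial>U) \<le> ennreal (gfun CARD('d) L \<rho>)"
proof -
  have "{y. close L a y \<rho>} \<in> sets (borel :: (real^'d) measure)"
  proof -
    have "Measurable.pred borel (\<lambda>y::real^'d. close L a y \<rho>)" by measurable
    thus ?thesis by (simp add: pred_def)
  qed
  hence "(\<integral>\<^sup>+u. indicator {y. close L a y \<rho>} u \<partial>U) = emeasure U {y. close L a y \<rho>}"
    by (intro nn_integral_indicator) simp
  also have "\<dots> \<le> ennreal (gfun CARD('d) L \<rho>)" by (rule U_close)
  finally show ?thesis .
qed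

lemma U_one: "(\<integral>\<^sup>+u. 1 \<partial>(U :: (real^'d::finite) measure)) = 1"
proof -
  interpret U: prob_space "U :: (real^'d) measure" by (rule U_prob)
  show ?thesis by (simp only: nn_integral_const U.emeasure_space_1) simp
qed

lemma main_chain:
  fixes js :: "nat list"
  assumes "finite I" "distinct js" "set js \<subseteq> I" "js \<noteq> []" "\<phi> \<in> borel_measurable borel"
  shows "(\<integral>\<^sup>+f. (if W L js f then 1 else 0) * \<phi> (snd (f (last js))) \<partial>PiM I (\<lambda>_. Q::((real^'d::finite)\<times>real) measure))
        \<le> (\<integral>\<^sup>+f. (if Dc js f then 1 else 0) * Gp L js f * \<phi> (snd (f (last js))) \<partial>PiM I (\<lambda>_. Q::((real^'d::finite)\<times>real) measure))"
  using assms
proof (induction js arbitrary: I \<phi> rule: rev_induct)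
  case Nil thus ?case by simp
next
  case (snoc j bl)
  show ?case
  proof (cases "bl = []")
    case True
    thus ?thesis by (simp add: W_def Dc_def Gp_def)
  next
    case False
    note ne = False
    interpret P: product_sigma_finite "\<lambda>_::nat. Q :: ((real^'d) \<times> real) measure" by (rule PQ_psf)
    interpret mu: prob_space \<mu> by (rule mu_prob)
    define I' where "I' = I - {j}"
    have jI: "j \<in> I" using snoc.prems by auto
    have II: "I = insert j I'" "j \<notin> I'" "finite I'" using jI snoc.prems(1) by (auto simp: I'_def)
    have jbl: "j \<notin> set bl" using snoc.prems(2) by auto
    have blI': "set bl \<subseteq> I'" using snoc.prems(2,3) by (auto simp: I'_def)
    have dbl: "distinct bl" using snoc.prems(2) by auto
    define p where "p = last bl"
    have pbl: "p \<in> set bl" using ne by (simp add: p_def)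
    have pj: "p \<noteq> j" using pbl jbl by auto
    note [measurable] = snoc.prems(5)
    define \<phi>' where "\<phi>' r = ennreal (gfun CARD('d) L (r + 1)) * psi \<phi> r" for r
    have m\<phi>': "\<phi>' \<in> borel_measurable borel"
      unfolding \<phi>'_def using psi_meas[OF snoc.prems(5)] by measurable
    have mL: "(\<lambda>f. (if W L (bl@[j]) f then 1 else 0) * \<phi> (snd (f (last (bl@[j]))))) \<in>
        borel_measurable (PiM (insert j I') (\<lambda>_. Q :: ((real^'d) \<times> real) measure))"
    proof (rule meas_PQ)
      have sI: "set (bl@[j]) \<subseteq> insert j I'" using blI' by auto
      note [measurable] = meas_W[OF sI, of L] meas_last[OF _ sI snoc.prems(5)]
      show "(\<lambda>f. (if W L (bl@[j]) f then 1 else 0) * \<phi> (snd (f (last (bl@[j]))))) \<in>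
        borel_measurable (PiM (insert j I') (\<lambda>_. B2 :: ((real^'d) \<times> real) measure))" by measurable
    qed
    have mR: "(\<lambda>f. (if Dc (bl@[j]) f then 1 else 0) * Gp L (bl@[j]) f * \<phi> (snd (f (last (bl@[j]))))) \<in>
        borel_measurable (PiM (insert j I') (\<lambda>_. Q :: ((real^'d) \<times> real) measure))"
    proof (rule meas_PQ)
      have sI: "set (bl@[j]) \<subseteq> insert j I'" using blI' by auto
      note [measurable] = meas_Dc[OF sI] meas_Gp[OF sI, of L] meas_last[OF _ sI snoc.prems(5)]
      show "(\<lambda>f. (if Dc (bl@[j]) f then 1 else 0) * Gp L (bl@[j]) f * \<phi> (snd (f (last (bl@[j]))))) \<in>
        borel_measurable (PiM (insert j I') (\<lambda>_. B2 :: ((real^'d) \<times> real) measure))" by measurable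
    qed
    have "(\<integral>\<^sup>+f. (if W L (bl@[j]) f then 1 else 0) * \<phi> (snd (f (last (bl@[j])))) \<partial>PiM I (\<lambda>_. Q::((real^'d)\<times>real) measure))
       = (\<integral>\<^sup>+x. (\<integral>\<^sup>+y. (if W L (bl@[j]) (x(j:=y)) then 1 else 0) * \<phi> (snd ((x(j:=y)) (last (bl@[j])))) \<partial>(Q::((real^'d)\<times>real) measure)) \<partial>PiM I' (\<lambda>_. Q::((real^'d)\<times>real) measure))"
      unfolding II(1) by (rule P.product_nn_integral_insert[OF II(3) II(2) mL])
    also have "\<dots> \<le> (\<integral>\<^sup>+x. (if W L bl x then 1 else 0) * \<phi>' (snd (x (last bl))) \<partial>PiM I' (\<lambda>_. Q::((real^'d)\<times>real) measure))"
    proof (rule nn_integral_mono)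
      fix x assume x: "x \<in> space (PiM I' (\<lambda>_. Q :: ((real^'d) \<times> real) measure))"
      define a where "a = fst (x p)"
      define r where "r = snd (x p)"
      have eq: "(if W L (bl@[j]) (x(j:=y)) then 1 else 0) * \<phi> (snd ((x(j:=y)) (last (bl@[j]))))
          = (if W L bl x then 1 else 0) * (indicator {u. close L a u (r+1)} (fst y) * (if snd y < r then \<phi> (snd y) else 0))" for y
      proof -
        have "W L bl (x(j:=y)) = W L bl x" by (rule W_cong) (use jbl in auto)
        moreover have "(x(j:=y)) p = x p" using pj by simp
        ultimately show ?thesis
          using W_snoc[OF ne, of L j "x(j:=y)"] by (auto simp: a_def r_def p_def indicator_def)
      qed
      have "(\<integral>\<^sup>+y. (if W L (bl@[j]) (x(j:=y)) then 1 else 0) * \<phi> (snd ((x(j:=y)) (last (bl@[j])))) \<partial>(Q::((real^'d)\<times>real) measure))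
          = (\<integral>\<^sup>+y. (if W L bl x then 1 else 0) * (indicator {u. close L a u (r+1)} (fst y) * (if snd y < r then \<phi> (snd y) else 0)) \<partial>(Q::((real^'d)\<times>real) measure))"
        by (simp only: eq)
      also have "\<dots> = (if W L bl x then 1 else 0) * (\<integral>\<^sup>+y. indicator {u. close L a u (r+1)} (fst y) * (if snd y < r then \<phi> (snd y) else 0) \<partial>(Q::((real^'d)\<times>real) measure))"
      proof (rule nn_integral_cmult)
        have "(\<lambda>y. indicator {u. close L a u (r+1)} (fst y) * (if snd y < r then \<phi> (snd y) else 0)) \<in> borel_measurable (B2 :: ((real^'d) \<times> real) measure)"
        proof -
          have "{u. close L a u (r+1)} \<in> sets (borel :: (real^'d) measure)"
          proof -
            have "Measurable.pred borel (\<lambda>y::real^'d. close L a y (r+1))" by measurable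
            thus ?thesis by (simp add: pred_def)
          qed
          thus ?thesis by measurable
        qed
        thus "(\<lambda>y. indicator {u. close L a u (r+1)} (fst y) * (if snd y < r then \<phi> (snd y) else 0)) \<in> borel_measurable Q"
          using measurable_cong_sets[OF sets_Q refl] by blast
      qed
      also have "\<dots> = (if W L bl x then 1 else 0) * ((\<integral>\<^sup>+u. indicator {u. close L a u (r+1)} u \<partial>U) * psi \<phi> r)"
      proof -
        have "{u. close L a u (r+1)} \<in> sets (borel :: (real^'d) measure)"
        proof -
          have "Measurable.pred borel (\<lambda>y::real^'d. close L a y (r+1))" by measurable
          thus ?thesis by (simp add: pred_def)
        qed
        hence "(\<integral>\<^sup>+y. indicator {u. close L a u (r+1)} (fst y) * (if snd y < r then \<phi> (snd y) else 0) \<partial>(Q::((real^'d)\<times>real) measure))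
          = (\<integral>\<^sup>+u. indicator {u. close L a u (r+1)} u \<partial>U) * psi \<phi> r"
          unfolding psi_def by (intro Q_factor) measurable
        thus ?thesis by simp
      qed
      also have "\<dots> \<le> (if W L bl x then 1 else 0) * \<phi>' (snd (x (last bl)))"
        unfolding \<phi>'_def r_def[symmetric] p_def[symmetric]
      proof (intro mult_left_mono mult_right_mono)
        show "(\<integral>\<^sup>+u. indicator {u. close L a u (r+1)} u \<partial>U) \<le> ennreal (gfun CARD('d) L (r + 1))"
          by (rule U_close_int)
      qed auto
      finally show "(\<integral>\<^sup>+y. (if W L (bl@[j]) (x(j:=y)) then 1 else 0) * \<phi> (snd ((x(j:=y)) (last (bl@[j])))) \<partial>(Q::((real^'d)\<times>real) measure))
         \<le> (if W L bl x then 1 else 0) * \<phi>' (snd (x (last bl)))" .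
    qed
    also have "\<dots> \<le> (\<integral>\<^sup>+x. (if Dc bl x then 1 else 0) * Gp L bl x * \<phi>' (snd (x (last bl))) \<partial>PiM I' (\<lambda>_. Q::((real^'d)\<times>real) measure))"
      by (rule snoc.IH[OF II(3) dbl blI' ne m\<phi>'])
    also have "\<dots> = (\<integral>\<^sup>+x. (\<integral>\<^sup>+y. (if Dc (bl@[j]) (x(j:=y)) then 1 else 0) * Gp L (bl@[j]) (x(j:=y)) * \<phi> (snd ((x(j:=y)) (last (bl@[j])))) \<partial>(Q::((real^'d)\<times>real) measure)) \<partial>PiM I' (\<lambda>_. Q::((real^'d)\<times>real) measure))"
    proof (rule nn_integral_cong)
      fix x assume x: "x \<in> space (PiM I' (\<lambda>_. Q :: ((real^'d) \<times> real) measure))"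
      define r where "r = snd (x p)"
      define C where "C = (if Dc bl x then 1 else 0) * Gp L bl x * ennreal (gfun CARD('d) L (r + 1))"
      have eq: "(if Dc (bl@[j]) (x(j:=y)) then 1 else 0) * Gp L (bl@[j]) (x(j:=y)) * \<phi> (snd ((x(j:=y)) (last (bl@[j]))))
          = C * ((\<lambda>_. 1) (fst y) * (if snd y < r then \<phi> (snd y) else 0))" for y
      proof -
        have "Dc bl (x(j:=y)) = Dc bl x" by (rule Dc_cong) (use jbl in auto)
        moreover have "Gp L bl (x(j:=y)) = Gp L bl x" by (rule Gp_cong) (use jbl in auto)
        moreover have "(x(j:=y)) p = x p" using pj by simp
        ultimately show ?thesis
          using Dc_snoc[OF ne, of j "x(j:=y)"] Gp_snoc[OF ne, of L j "x(j:=y)"]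
          by (auto simp: C_def r_def p_def mult_ac)
      qed
      have "(\<integral>\<^sup>+y. (if Dc (bl@[j]) (x(j:=y)) then 1 else 0) * Gp L (bl@[j]) (x(j:=y)) * \<phi> (snd ((x(j:=y)) (last (bl@[j])))) \<partial>(Q::((real^'d)\<times>real) measure))
         = (\<integral>\<^sup>+y. C * ((\<lambda>_. 1) (fst y) * (if snd y < r then \<phi> (snd y) else 0)) \<partial>(Q::((real^'d)\<times>real) measure))"
        by (simp only: eq)
      also have "\<dots> = C * (\<integral>\<^sup>+y. (\<lambda>_. 1) (fst y) * (if snd y < r then \<phi> (snd y) else 0) \<partial>(Q::((real^'d)\<times>real) measure))"
      proof (rule nn_integral_cmult)
        have "(\<lambda>y. (\<lambda>_. 1::ennreal) (fst y) * (if snd y < r then \<phi> (snd y) else 0)) \<in> borel_measurable (B2 :: ((real^'d) \<times> real) measure)"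
          by measurable
        thus "(\<lambda>y. (\<lambda>_. 1::ennreal) (fst y) * (if snd y < r then \<phi> (snd y) else 0)) \<in> borel_measurable (Q::((real^'d)\<times>real) measure)"
          using measurable_cong_sets[OF sets_Q refl] by blast
      qed
      also have "\<dots> = C * psi \<phi> r"
      proof -
        have "emeasure lborel (torus_box L :: (real^'d) set) / emeasure lborel (torus_box L :: (real^'d) set) = 1"
          using Lpos by (simp add: emeasure_torus_box divide_ennreal)
        thus ?thesis by (subst Q_factor) (simp_all add: U_one psi_def)
      qed
      also have "\<dots> = (if Dc bl x then 1 else 0) * Gp L bl x * \<phi>' (snd (x (last bl)))"
        by (simp add: C_def \<phi>'_def r_def p_def mult_ac)
      finally show "(if Dc bl x then 1 else 0) * Gp L bl x * \<phi>' (snd (x (last bl))) =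
         (\<integral>\<^sup>+y. (if Dc (bl@[j]) (x(j:=y)) then 1 else 0) * Gp L (bl@[j]) (x(j:=y)) * \<phi> (snd ((x(j:=y)) (last (bl@[j])))) \<partial>(Q::((real^'d)\<times>real) measure))" by simp
    qed
    also have "\<dots> = (\<integral>\<^sup>+f. (if Dc (bl@[j]) f then 1 else 0) * Gp L (bl@[j]) f * \<phi> (snd (f (last (bl@[j])))) \<partial>PiM I (\<lambda>_. Q::((real^'d)\<times>real) measure))"
      unfolding II(1) by (rule P.product_nn_integral_insert[OF II(3) II(2) mR, symmetric])
    finally show ?thesis .
  qed
qed

end

lemma W_imp_Dc: "W L js f \<Longrightarrow> Dc js f"
  unfolding W_def Dc_def by auto

lemma Dc_sorted:
  assumes "Dc js f"
  shows "sorted_wrt (<) (map (\<lambda>j. - snd (f j)) js)"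
proof -
  have "transp ((<) :: real \<Rightarrow> real \<Rightarrow> bool)" by (auto simp: transp_def)
  moreover have "\<forall>i. Suc i < length js \<longrightarrow> - snd (f (js!i)) < - snd (f (js!Suc i))"
    using assms unfolding Dc_def by auto
  ultimately show ?thesis by (subst sorted_wrt_iff_nth_Suc_transp) auto
qed

lemma Dc_distinct: "Dc js f \<Longrightarrow> distinct js"
  using Dc_sorted[of js f] by (auto simp: strict_sorted_iff distinct_map)

lemma Dc_inj:
  assumes "Dc js1 f" "Dc js2 f" "set js1 = set js2"
  shows "js1 = js2"
proof -
  let ?h = "\<lambda>j. - snd (f j)"
  have "map ?h js2 = map ?h js1"
    by (rule strict_sorted_equal[OF Dc_sorted[OF assms(1)] Dc_sorted[OF assms(2)]]) (simp add: assms(3))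
  moreover have "inj_on ?h (set js1 \<union> set js2)"
    using Dc_sorted[OF assms(1)] assms(3) by (auto simp: strict_sorted_iff distinct_map)
  ultimately show ?thesis using inj_on_map_eq_map[of "\<lambda>j. - snd (f j)" js1 js2] by simp
qed

lemma torus_close:
  assumes "torus_dist L x y \<le> r"
  shows "close L x y (r + 1)"
proof -
  let ?K = "{k::real^'a. \<forall>i. k$i \<in> \<int>}"
  have ne: "(\<lambda>k. dist x (y + L *\<^sub>R k)) ` ?K \<noteq> {}"
  proof -
    have "(0::real^'a) \<in> ?K" by simp
    thus ?thesis by blast
  qed
  have "Inf ((\<lambda>k. dist x (y + L *\<^sub>R k)) ` ?K) < r + 1"
    using assms unfolding torus_dist_def by simp
  then obtain k where k: "k \<in> ?K" "dist x (y + L *\<^sub>R k) < r + 1"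
    using cInf_lessD[OF ne] by blast
  show ?thesis unfolding close_def
  proof
    fix i
    obtain j where j: "k$i = of_int j" using k(1) by (auto elim: Ints_cases)
    have "\<bar>(x - (y + L *\<^sub>R k))$i\<bar> \<le> norm (x - (y + L *\<^sub>R k))"
      by (rule component_le_norm_cart)
    hence "\<bar>x$i - y$i - L * of_int j\<bar> \<le> r + 1"
      using k(2) j by (simp add: dist_norm algebra_simps)
    thus "\<exists>j::int. \<bar>x$i - y$i - L * of_int j\<bar> \<le> r + 1" by blast
  qed
qed

lemma chain_to_W:
  assumes "has_desc_chain L f k m'" "m0 \<le> m'"
  shows "\<exists>js. distinct js \<and> set js \<subseteq> {..<k} \<and> length js = m0 \<and> W L js f"
proof -
  obtain js' where js': "length js' = m'" "set js' \<subseteq> {..<k}"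
    "\<And>i. Suc i < m' \<Longrightarrow> snd (f (js' ! Suc i)) < snd (f (js' ! i)) \<and>
           torus_dist L (fst (f (js' ! i))) (fst (f (js' ! Suc i))) \<le> snd (f (js' ! i))"
    using assms(1) unfolding has_desc_chain_def by blast
  define js where "js = take m0 js'"
  have len: "length js = m0" using js' assms(2) by (simp add: js_def)
  have sub: "set js \<subseteq> {..<k}" using js'(2) set_take_subset[of m0 js'] by (auto simp: js_def)
  have W: "W L js f" unfolding W_def
  proof
    fix i assume "i \<in> {..<length js - 1}"
    hence i: "Suc i < m0" using len by auto
    hence "Suc i < m'" using assms(2) by simp
    moreover have "js!i = js'!i" "js!Suc i = js'!Suc i" using i by (simp_all add: js_def)
    ultimately show "snd (f (js!Suc i)) < snd (f (js!i)) \<and> close L (fst (f (js!i))) (fst (f (js!Suc i))) (snd (f (js!i)) + 1)"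
      using js'(3)[of i] torus_close by auto
  qed
  show ?thesis using len sub W Dc_distinct[OF W_imp_Dc[OF W]] by blast
qed


definition Gf :: "nat \<Rightarrow> real \<Rightarrow> real \<Rightarrow> real" where
  "Gf d L r = max (gfun d L (r+1)) (1 / L^d)"

lemma Gp_le:
  fixes f :: "nat \<Rightarrow> (real^'d::finite) \<times> real"
  assumes L: "L > 0" and d: "distinct js" and len: "length js = m0" and m0: "m0 \<ge> 1"
  shows "Gp L js f \<le> ennreal (L^CARD('d)) * (\<Prod>j\<in>set js. ennreal (Gf CARD('d) L (snd (f j))))"
proof -
  let ?h = "\<lambda>j. ennreal (Gf CARD('d) L (snd (f j)))"
  have "(\<Prod>j\<in>set js. ?h j) = prod_list (map ?h js)" by (rule prod.distinct_set_conv_list[OF d])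
  also have "\<dots> = (\<Prod>i\<in>{0..<m0}. ?h (js!i))" using len by (simp add: prod.list_conv_set_nth)
  also have "{0..<m0} = insert (m0-1) {..<m0-1}" using m0 by auto
  finally have eq: "(\<Prod>j\<in>set js. ?h j) = ?h (js!(m0-1)) * (\<Prod>i\<in>{..<m0-1}. ?h (js!i))"
    by simp
  have "Gp L js f \<le> (\<Prod>i\<in>{..<m0-1}. ?h (js!i))"
    unfolding Gp_def len by (intro prod_mono_ennreal) (auto simp: Gf_def intro!: ennreal_leI)
  also have "\<dots> \<le> (ennreal (L^CARD('d)) * ?h (js!(m0-1))) * (\<Prod>i\<in>{..<m0-1}. ?h (js!i))"
  proof -
    have "1 / L^CARD('d) \<le> Gf CARD('d) L (snd (f (js!(m0-1))))" by (simp add: Gf_def)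
    hence "1 \<le> L^CARD('d) * Gf CARD('d) L (snd (f (js!(m0-1))))"
      using L by (simp add: field_simps)
    hence "1 \<le> ennreal (L^CARD('d)) * ?h (js!(m0-1))"
      using L by (simp add: ennreal_mult'[symmetric] ennreal_mult[symmetric])
    thus ?thesis using mult_right_mono[of 1 "ennreal (L^CARD('d)) * ?h (js!(m0-1))" "(\<Prod>i\<in>{..<m0-1}. ?h (js!i))"]
      by simp
  qed
  also have "\<dots> = ennreal (L^CARD('d)) * (\<Prod>j\<in>set js. ?h j)" unfolding eq by (simp add: mult_ac)
  finally show ?thesis .
qed

lemma sym_bound:
  fixes f :: "nat \<Rightarrow> (real^'d::finite) \<times> real"
  assumes L: "L > 0" and m0: "m0 \<ge> 1"
  shows "(\<Sum>js\<in>{js. distinct js \<and> set js \<subseteq> {..<k} \<and> length js = m0}. (if Dc js f then 1 else 0) * Gp L js f)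
     \<le> (\<Sum>S\<in>{S. S \<subseteq> {..<k} \<and> card S = m0}. ennreal (L^CARD('d)) * (\<Prod>j\<in>S. ennreal (Gf CARD('d) L (snd (f j)))))"
proof -
  define J where "J = {js. distinct js \<and> set js \<subseteq> {..<k} \<and> length js = m0}"
  define SS where "SS = {S. S \<subseteq> {..<k} \<and> card S = m0}"
  define H where "H S = ennreal (L^CARD('d)) * (\<Prod>j\<in>S. ennreal (Gf CARD('d) L (snd (f j))))" for S
  define A where "A = {js\<in>J. Dc js f}"
  have finJ: "finite J"
    by (rule finite_subset[OF _ finite_lists_length_eq[of "{..<k}" m0]]) (auto simp: J_def)
  have finS: "finite SS" unfolding SS_def by (rule finite_subset[of _ "Pow {..<k}"]) auto
  have "(\<Sum>js\<in>J. (if Dc js f then 1 else 0) * Gp L js f) = (\<Sum>js\<in>J. if Dc js f then Gp L js f else 0)"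
    by (intro sum.cong) auto
  also have "\<dots> = (\<Sum>js\<in>A. Gp L js f)" unfolding A_def by (rule sum.inter_filter[OF finJ, symmetric])
  also have "\<dots> \<le> (\<Sum>js\<in>A. H (set js))"
    by (intro sum_mono) (auto simp: A_def J_def H_def intro!: Gp_le[OF L _ _ m0])
  also have "\<dots> = (\<Sum>S\<in>set ` A. H S)"
  proof (rule sum.reindex[symmetric, unfolded comp_def])
    show "inj_on set A" by (auto simp: inj_on_def A_def intro: Dc_inj)
  qed
  also have "\<dots> \<le> (\<Sum>S\<in>SS. H S)"
  proof (rule sum_mono2[OF finS])
    show "set ` A \<subseteq> SS" by (auto simp: A_def J_def SS_def distinct_card)
  qed auto
  finally show ?thesis unfolding J_def SS_def H_def .
qed


context chainsetup begin

lemma Gf_meas[measurable]: "(\<lambda>t. Gf d L t) \<in> borel_measurable borel"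
  unfolding Gf_def by measurable

lemma prod_int:
  fixes k :: nat
  assumes S: "S \<subseteq> {..<k}"
  shows "(\<integral>\<^sup>+f. (\<Prod>j\<in>S. ennreal (Gf CARD('d) L (snd (f j)))) \<partial>PiM {..<k} (\<lambda>_. Q :: ((real^'d::finite)\<times>real) measure))
     = (\<integral>\<^sup>+t. ennreal (Gf CARD('d) L t) \<partial>\<mu>) ^ card S"
proof -
  interpret P: product_sigma_finite "\<lambda>_::nat. Q :: ((real^'d) \<times> real) measure" by (rule PQ_psf)
  interpret Qp: prob_space "Q :: ((real^'d) \<times> real) measure" by (rule Q_prob)
  define F where "F i y = (if i \<in> S then ennreal (Gf CARD('d) L (snd y)) else 1)" for i and y :: "(real^'d) \<times> real"
  have eq1: "(\<Prod>j\<in>S. ennreal (Gf CARD('d) L (snd (f j)))) = (\<Prod>i\<in>{..<k}. F i (f i))" for f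
    unfolding F_def using S by (subst prod.inter_restrict[symmetric]) (auto intro!: prod.cong)
  have mF: "F i \<in> borel_measurable (Q :: ((real^'d) \<times> real) measure)" for i
  proof -
    have "F i \<in> borel_measurable (B2 :: ((real^'d) \<times> real) measure)" unfolding F_def by measurable
    thus ?thesis using measurable_cong_sets[OF sets_Q refl] by blast
  qed
  have intF: "integral\<^sup>N (Q::((real^'d)\<times>real) measure) (F i) = (if i \<in> S then (\<integral>\<^sup>+t. ennreal (Gf CARD('d) L t) \<partial>\<mu>) else 1)" for i
  proof (cases "i \<in> S")
    case True
    have "integral\<^sup>N (Q::((real^'d)\<times>real) measure) (F i) = (\<integral>\<^sup>+y. (\<lambda>_. 1) (fst y) * ennreal (Gf CARD('d) L (snd y)) \<partial>(Q::((real^'d)\<times>real) measure))"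
      unfolding F_def using True by simp
    also have "\<dots> = (\<integral>\<^sup>+u. 1 \<partial>(U :: (real^'d) measure)) * (\<integral>\<^sup>+t. ennreal (Gf CARD('d) L t) \<partial>\<mu>)"
      by (rule Q_factor) measurable
    finally show ?thesis by (simp only: U_one mult_1 True if_True)
  next
    case False
    thus ?thesis unfolding F_def using Qp.emeasure_space_1 by simp
  qed
  have "(\<integral>\<^sup>+f. (\<Prod>j\<in>S. ennreal (Gf CARD('d) L (snd (f j)))) \<partial>PiM {..<k} (\<lambda>_. Q :: ((real^'d::finite)\<times>real) measure))
     = (\<integral>\<^sup>+f. (\<Prod>i\<in>{..<k}. F i (f i)) \<partial>PiM {..<k} (\<lambda>_. Q :: ((real^'d::finite)\<times>real) measure))"
    by (simp only: eq1)
  also have "\<dots> = (\<Prod>i\<in>{..<k}. integral\<^sup>N (Q::((real^'d)\<times>real) measure) (F i))"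
    by (rule P.product_nn_integral_prod) (auto intro: mF)
  also have "\<dots> = (\<Prod>i\<in>{..<k}. (if i \<in> S then (\<integral>\<^sup>+t. ennreal (Gf CARD('d) L t) \<partial>\<mu>) else 1))"
    by (simp only: intF)
  also have "\<dots> = (\<Prod>i\<in>S. (\<integral>\<^sup>+t. ennreal (Gf CARD('d) L t) \<partial>\<mu>))"
    using S by (subst prod.inter_restrict[symmetric]) (auto intro!: prod.cong simp: Int_absorb1)
  also have "\<dots> = (\<integral>\<^sup>+t. ennreal (Gf CARD('d) L t) \<partial>\<mu>) ^ card S" by simp
  finally show ?thesis .
qed

lemma meas_Hp:
  fixes k :: nat
  assumes S: "S \<subseteq> {..<k}"
  shows "(\<lambda>f. (\<Prod>j\<in>S. ennreal (Gf CARD('d) L (snd (f j))))) \<in> borel_measurable (PiM {..<k} (\<lambda>_. Q :: ((real^'d::finite)\<times>real) measure))"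
proof (rule meas_PQ)
  show "(\<lambda>f. (\<Prod>j\<in>S. ennreal (Gf CARD('d) L (snd (f j))))) \<in> borel_measurable (PiM {..<k} (\<lambda>_. B2 :: ((real^'d::finite)\<times>real) measure))"
  proof (rule borel_measurable_prod_ennreal)
    fix j assume "j \<in> S"
    hence "j \<in> {..<k}" using S by auto
    note [measurable] = measurable_component_singleton[OF this, of "\<lambda>_. B2 :: ((real^'d::finite)\<times>real) measure"]
    show "(\<lambda>f. ennreal (Gf CARD('d) L (snd (f j)))) \<in> borel_measurable (PiM {..<k} (\<lambda>_. B2 :: ((real^'d::finite)\<times>real) measure))"
      by measurable
  qed
qed

lemma meas_H:
  fixes k :: nat
  assumes S: "S \<subseteq> {..<k}"
  shows "(\<lambda>f. ennreal (L^CARD('d)) * (\<Prod>j\<in>S. ennreal (Gf CARD('d) L (snd (f j))))) \<in> borel_measurable (PiM {..<k} (\<lambda>_. Q :: ((real^'d::finite)\<times>real) measure))"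
  using meas_Hp[OF S, where 'd='d] by measurable

lemma fixed_k:
  fixes k m0 :: nat and x :: real
  assumes m0: "m0 \<ge> 1" and hm: "\<And>m. real m > x \<Longrightarrow> m0 \<le> m"
  shows "emeasure (PiM {..<k} (\<lambda>_. Q::((real^'d::finite)\<times>real) measure))
      {f \<in> space (PiM {..<k} (\<lambda>_. Q::((real^'d::finite)\<times>real) measure)). \<exists>m. real m > x \<and> has_desc_chain L f k m}
   \<le> of_nat (k choose m0) * ennreal (L^CARD('d)) * (\<integral>\<^sup>+t. ennreal (Gf CARD('d) L t) \<partial>\<mu>)^m0"
proof -
  define P where "P = PiM {..<k} (\<lambda>_. Q::((real^'d::finite)\<times>real) measure)"
  define E where "E = {f \<in> space P. \<exists>m. real m > x \<and> has_desc_chain L f k m}"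
  define J where "J = {js. distinct js \<and> set js \<subseteq> {..<k} \<and> length js = m0}"
  define SS where "SS = {S. S \<subseteq> {..<k} \<and> card S = m0}"
  define EG where "EG = (\<integral>\<^sup>+t. ennreal (Gf CARD('d) L t) \<partial>\<mu>)"
  have finJ: "finite J"
    by (rule finite_subset[OF _ finite_lists_length_eq[of "{..<k}" m0]]) (auto simp: J_def)
  have finS: "finite SS" unfolding SS_def by (rule finite_subset[of _ "Pow {..<k}"]) auto
  have mW: "(\<lambda>f. if W L js f then 1 else 0 :: ennreal) \<in> borel_measurable P" if "js \<in> J" for js
    unfolding P_def
  proof (rule meas_PQ)
    have "set js \<subseteq> {..<k}" using that by (simp add: J_def)
    note [measurable] = meas_W[OF this, of L]
    show "(\<lambda>f. if W L js f then 1 else 0 :: ennreal) \<in> borel_measurable (PiM {..<k} (\<lambda>_. B2 :: ((real^'d::finite)\<times>real) measure))"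
      by measurable
  qed
  have mD: "(\<lambda>f. (if Dc js f then 1 else 0) * Gp L js f) \<in> borel_measurable P" if "js \<in> J" for js
    unfolding P_def
  proof (rule meas_PQ)
    have "set js \<subseteq> {..<k}" using that by (simp add: J_def)
    note [measurable] = meas_Dc[OF this] meas_Gp[OF this, of L]
    show "(\<lambda>f. (if Dc js f then 1 else 0) * Gp L js f) \<in> borel_measurable (PiM {..<k} (\<lambda>_. B2 :: ((real^'d::finite)\<times>real) measure))"
      by measurable
  qed
  have ind: "indicator E f \<le> (\<Sum>js\<in>J. if W L js f then 1 else 0 :: ennreal)" for f
  proof (cases "f \<in> E")
    case True
    then obtain m where "real m > x" "has_desc_chain L f k m" by (auto simp: E_def)
    then obtain js where js: "distinct js" "set js \<subseteq> {..<k}" "length js = m0" "W L js f"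
      using chain_to_W[of L f k m m0] hm by blast
    hence "js \<in> J" by (simp add: J_def)
    hence "(if W L js f then 1 else 0 :: ennreal) \<le> (\<Sum>js\<in>J. if W L js f then 1 else 0 :: ennreal)"
      by (intro member_le_sum finJ) auto
    thus ?thesis using True js(4) by simp
  qed simp
  have "emeasure P E \<le> (\<integral>\<^sup>+f. (\<Sum>js\<in>J. if W L js f then 1 else 0 :: ennreal) \<partial>P)"
  proof (cases "E \<in> sets P")
    case True
    hence "emeasure P E = (\<integral>\<^sup>+f. indicator E f \<partial>P)" by simp
    also have "\<dots> \<le> (\<integral>\<^sup>+f. (\<Sum>js\<in>J. if W L js f then 1 else 0 :: ennreal) \<partial>P)"
      by (intro nn_integral_mono ind)
    finally show ?thesis .
  next
    case False
    thus ?thesis by (simp add: emeasure_notin_sets)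
  qed
  also have "\<dots> = (\<Sum>js\<in>J. (\<integral>\<^sup>+f. (if W L js f then 1 else 0 :: ennreal) \<partial>P))"
    by (rule nn_integral_sum) (use mW in auto)
  also have "\<dots> \<le> (\<Sum>js\<in>J. (\<integral>\<^sup>+f. (if Dc js f then 1 else 0) * Gp L js f \<partial>P))"
  proof (rule sum_mono)
    fix js assume js: "js \<in> J"
    hence "js \<noteq> []" using m0 by (auto simp: J_def)
    thus "(\<integral>\<^sup>+f. (if W L js f then 1 else 0 :: ennreal) \<partial>P) \<le> (\<integral>\<^sup>+f. (if Dc js f then 1 else 0) * Gp L js f \<partial>P)"
      using main_chain[of "{..<k}" js "\<lambda>_. 1"] js unfolding P_def by (simp add: J_def)
  qed
  also have "\<dots> = (\<integral>\<^sup>+f. (\<Sum>js\<in>J. (if Dc js f then 1 else 0) * Gp L js f) \<partial>P)"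
    by (rule nn_integral_sum[symmetric]) (use mD in auto)
  also have "\<dots> \<le> (\<integral>\<^sup>+f. (\<Sum>S\<in>SS. ennreal (L^CARD('d)) * (\<Prod>j\<in>S. ennreal (Gf CARD('d) L (snd (f j))))) \<partial>P)"
    by (intro nn_integral_mono) (unfold J_def SS_def, rule sym_bound[OF Lpos m0])
  also have "\<dots> = (\<Sum>S\<in>SS. (\<integral>\<^sup>+f. ennreal (L^CARD('d)) * (\<Prod>j\<in>S. ennreal (Gf CARD('d) L (snd (f j)))) \<partial>P))"
    by (rule nn_integral_sum) (auto simp: SS_def P_def intro!: meas_H)
  also have "\<dots> = (\<Sum>S\<in>SS. ennreal (L^CARD('d)) * EG^m0)"
  proof (rule sum.cong[OF refl])
    fix S assume S: "S \<in> SS"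
    have "(\<integral>\<^sup>+f. ennreal (L^CARD('d)) * (\<Prod>j\<in>S. ennreal (Gf CARD('d) L (snd (f j)))) \<partial>P)
       = ennreal (L^CARD('d)) * (\<integral>\<^sup>+f. (\<Prod>j\<in>S. ennreal (Gf CARD('d) L (snd (f j)))) \<partial>P)"
    proof (rule nn_integral_cmult)
      show "(\<lambda>f. \<Prod>j\<in>S. ennreal (Gf CARD('d) L (snd (f j)))) \<in> borel_measurable P"
        unfolding P_def using meas_Hp[of S k] S by (simp add: SS_def)
    qed
    also have "\<dots> = ennreal (L^CARD('d)) * EG^m0"
      using S prod_int[of S k, where 'd='d] by (simp add: SS_def P_def EG_def)
    finally show "(\<integral>\<^sup>+f. ennreal (L^CARD('d)) * (\<Prod>j\<in>S. ennreal (Gf CARD('d) L (snd (f j)))) \<partial>P) = ennreal (L^CARD('d)) * EG^m0" .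
  qed
  also have "\<dots> = of_nat (k choose m0) * ennreal (L^CARD('d)) * EG^m0"
    using n_subsets[of "{..<k::nat}" m0] by (simp add: SS_def mult_ac)
  finally show ?thesis unfolding P_def E_def EG_def .
qed

end

lemma pois_sums:
  fixes lam Y :: real and m :: nat
  shows "(\<lambda>k. exp (- lam) * lam ^ k / fact k * (real (k choose m) * Y)) sums (lam ^ m / fact m * Y)"
proof -
  have "(\<lambda>i. lam ^ i /\<^sub>R fact i) sums exp lam" by (rule exp_converges)
  hence "(\<lambda>i. lam ^ i / fact i) sums exp lam" by (simp add: divide_inverse_commute scaleR_conv_of_real)
  hence S1: "(\<lambda>i. (exp (- lam) * lam ^ m / fact m * Y) * (lam ^ i / fact i)) sums ((exp (- lam) * lam ^ m / fact m * Y) * exp lam)"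
    by (rule sums_mult)
  have e2: "(exp (- lam) * lam ^ m / fact m * Y) * exp lam = lam ^ m / fact m * Y"
    by (simp add: exp_minus field_simps)
  have e1: "(exp (- lam) * lam ^ m / fact m * Y) * (lam ^ i / fact i) =
      exp (- lam) * lam ^ (i+m) / fact (i+m) * (real ((i+m) choose m) * Y)" for i
  proof -
    have "real ((i+m) choose m) = fact (i+m) / (fact m * fact i)"
      by (subst binomial_fact) auto
    thus ?thesis by (simp add: field_simps power_add)
  qed
  have "(\<lambda>i. exp (- lam) * lam ^ (i+m) / fact (i+m) * (real ((i+m) choose m) * Y)) sums (lam ^ m / fact m * Y)"
    using S1 by (simp only: e1 e2)
  thus ?thesis
    by (subst sums_zero_iff_shift[symmetric, of m]) (auto simp: binomial_eq_0)
qed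

lemma pow_fact_le_exp:
  fixes y :: real assumes "y \<ge> 0"
  shows "y ^ m / fact m \<le> exp y"
proof -
  have S: "(\<lambda>i. y ^ i / fact i) sums exp y"
    using exp_converges[of y] by (simp add: divide_inverse_commute scaleR_conv_of_real)
  have "y ^ m / fact m \<le> (\<Sum>i<Suc m. y ^ i / fact i)"
    by (rule member_le_sum) (use assms in auto)
  also have "\<dots> \<le> exp y"
    using sum_le_suminf[OF sums_summable[OF S], of "{..<Suc m}"] sums_unique[OF S] assms by auto
  finally show ?thesis .
qed

lemma asymp_bound:
  fixes K B :: real and d :: nat
  assumes B: "B > 0"
  shows "\<exists>c>0. \<forall>\<^sub>F n in sequentially. \<forall>m::nat. real m > c * ln (real n) \<longrightarrow>
            real n ^ d * (K + B * ln (real n)) ^ m / fact m \<le> 1 / real n \<and>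
            0 \<le> real n ^ d * (K + B * ln (real n)) ^ m / fact m"
proof -
  define c where "c = max 1 (2 * exp 1 * B * exp (real d + 1))"
  have c1: "c \<ge> 1" and c2: "c \<ge> 2 * exp 1 * B * exp (real d + 1)" by (auto simp: c_def)
  have cpos: "c > 0" using c1 by simp
  obtain N :: nat where N: "real N \<ge> exp (\<bar>K\<bar> / B + 1)" using real_arch_simple by blast
  have ev: "\<forall>m::nat. real m > c * ln (real n) \<longrightarrow>
            real n ^ d * (K + B * ln (real n)) ^ m / fact m \<le> 1 / real n \<and>
            0 \<le> real n ^ d * (K + B * ln (real n)) ^ m / fact m" if nN: "n \<ge> N" for n
  proof (intro allI impI)
    fix m :: nat assume m: "real m > c * ln (real n)"
    have npos: "real n > 0" using nN N by (smt (verit) exp_gt_zero of_nat_mono)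
    define x where "x = ln (real n)"
    have "ln (real n) \<ge> \<bar>K\<bar> / B + 1"
      using N nN npos by (smt (verit, best) exp_gt_zero ln_ge_iff of_nat_mono)
    hence xK: "x \<ge> \<bar>K\<bar> / B + 1" by (simp add: x_def)
    have x1: "x \<ge> 1" using xK B by (smt (verit) divide_nonneg_pos abs_ge_zero)
    have KB: "\<bar>K\<bar> \<le> B * x" using xK B by (simp add: field_simps)
    define q where "q = K + B * x"
    have q0: "0 \<le> q" and q2: "q \<le> 2 * B * x" using KB by (auto simp: q_def)
    have mpos: "real m > 0" using m cpos x1 x_def by (smt (verit) mult_pos_pos)
    have mx: "real m \<ge> c * x" using m x_def by simp
    have "q ^ m / fact m = (q / real m) ^ m * (real m ^ m / fact m)"
      using mpos by (simp add: power_divide)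
    also have "\<dots> \<le> (q / real m) ^ m * exp (real m)"
      by (intro mult_left_mono pow_fact_le_exp) (use q0 mpos in auto)
    also have "\<dots> = (exp 1 * q / real m) ^ m"
      by (simp add: power_mult_distrib power_divide exp_of_nat_mult[symmetric] mult.commute)
    also have "\<dots> \<le> (exp (- (real d + 1))) ^ m"
    proof (rule power_mono)
      have "exp 1 * q / real m \<le> exp 1 * (2 * B * x) / (c * x)"
        using q0 q2 mpos mx x1 cpos
        by (intro frac_le) (auto intro!: mult_left_mono)
      also have "\<dots> = 2 * exp 1 * B / c" using x1 by (simp add: field_simps)
      also have "\<dots> \<le> exp (- (real d + 1))"
      proof -
        have ee: "exp(real d+1) * exp(-(real d+1)) = 1" by (simp flip: exp_add)
        have e: "2*exp 1*B = (2*exp 1*B*exp(real d+1)) * exp(-(real d+1))" by (simp only: mult.assoc ee mult_1_right)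
        have "2*exp 1*B \<le> c * exp(-(real d+1))" by (subst e) (intro mult_right_mono c2, simp)
        thus ?thesis using cpos by (simp add: divide_le_eq mult.commute)
      qed
      finally show "exp 1 * q / real m \<le> exp (- (real d + 1))" .
    qed (use q0 mpos in auto)
    also have "\<dots> = exp (- (real d + 1) * real m)" by (simp add: exp_of_nat_mult[symmetric] mult.commute)
    also have "\<dots> \<le> exp (- (real d + 1) * x)"
    proof (intro exp_mono)
      have "x \<le> c * x" using c1 x1 by (simp add: mult_le_cancel_right1)
      hence "x \<le> real m" using mx by linarith
      hence "(real d + 1) * x \<le> (real d + 1) * real m" by (intro mult_left_mono) auto
      thus "- (real d + 1) * real m \<le> - (real d + 1) * x" by simp
    qed
    also have "\<dots> = 1 / real n ^ (d+1)"
    proof -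
      have "exp (real (Suc d) * x) = real n ^ (Suc d)"
        unfolding exp_of_nat_mult using npos by (simp add: x_def)
      moreover have "- (real d + 1) * x = - (real (Suc d) * x)" by (simp add: algebra_simps)
      ultimately show ?thesis by (simp add: exp_minus inverse_eq_divide)
    qed
    finally have "q ^ m / fact m \<le> 1 / real n ^ (d+1)" .
    hence "real n ^ d * (q ^ m / fact m) \<le> real n ^ d * (1 / real n ^ (d+1))"
      by (intro mult_left_mono) (use npos in auto)
    also have "\<dots> = 1 / real n" using npos by (simp add: field_simps)
    finally show "real n ^ d * (K + B * ln (real n)) ^ m / fact m \<le> 1 / real n \<and>
            0 \<le> real n ^ d * (K + B * ln (real n)) ^ m / fact m"
      using q0 npos by (simp add: q_def x_def)
  qed
  show ?thesis using cpos ev by (intro exI[of _ c]) (auto simp: eventually_sequentially)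
qed


lemma M_bound:
  fixes t L h0 :: real and d J :: nat
  assumes t: "t \<ge> 0" and h0: "h0 \<ge> 1" and L: "L > 0" "L \<le> 2^J"
  shows "min (L^d) ((6*(t+1))^d) \<le> (12*h0)^d + (\<Sum>j\<le>J. (24*2^j*h0)^d * indicator {2^j*h0<..} t)"
proof -
  have nn: "0 \<le> (\<Sum>j\<le>J. (24*2^j*h0)^d * indicator {2^j*h0<..} t)"
    using h0 by (intro sum_nonneg) auto
  show ?thesis
  proof (cases "t \<le> h0")
    case True
    have "min (L^d) ((6*(t+1))^d) \<le> (6*(t+1))^d" by simp
    also have "\<dots> \<le> (12*h0)^d" using True t h0 by (intro power_mono) auto
    finally show ?thesis using nn by linarith
  next
    case False
    define S where "S = {j. j \<le> J \<and> 2^j*h0 < t}"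
    have finS: "finite S" by (simp add: S_def)
    have S0: "0 \<in> S" using False by (simp add: S_def)
    define js where "js = Max S"
    have jsS: "js \<in> S" using finS S0 unfolding js_def by (intro Max_in) auto
    have jsJ: "js \<le> J" and tjs: "2^js*h0 < t" using jsS by (auto simp: S_def)
    have trm: "(24*2^js*h0)^d * indicator {2^js*h0<..} t \<le> (\<Sum>j\<le>J. (24*2^j*h0)^d * indicator {2^j*h0<..} t)"
      using jsJ h0 by (intro member_le_sum) auto
    have "min (L^d) ((6*(t+1))^d) \<le> (24*2^js*h0)^d"
    proof (cases "js = J")
      case True
      have "min (L^d) ((6*(t+1))^d) \<le> L^d" by simp
      also have "\<dots> \<le> (24*2^js*h0)^d"
      proof (intro power_mono)
        have "(2::real)^js * 1 \<le> 2^js * (24*h0)" using h0 by (intro mult_left_mono) auto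
        hence "(2::real)^js \<le> 24*2^js*h0" by (simp add: mult_ac)
        thus "L \<le> 24*2^js*h0" using L(2) True by (metis order.trans)
      qed (use L in auto)
      finally show ?thesis .
    next
      case False
      hence "Suc js \<notin> S"
        using Max_ge[OF finS, of "Suc js"] unfolding js_def[symmetric] by auto
      hence "t \<le> 2^Suc js * h0" using jsJ False by (auto simp: S_def)
      hence "6*(t+1) \<le> 24*2^js*h0"
      proof -
        assume a: "t \<le> 2^Suc js * h0"
        have "(1::real)*1 \<le> 2^Suc js * h0" using h0 by (intro mult_mono) (auto simp del: power_Suc intro: one_le_power)
        thus ?thesis using a by simp
      qed
      hence "(6*(t+1))^d \<le> (24*2^js*h0)^d" using t by (intro power_mono) auto
      thus ?thesis by simp
    qed
    also have "\<dots> = (24*2^js*h0)^d * indicator {2^js*h0<..} t" using tjs by simp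
    also have "\<dots> \<le> (\<Sum>j\<le>J. (24*2^j*h0)^d * indicator {2^j*h0<..} t)" by (rule trm)
    moreover have "0 \<le> (12*h0)^d" using h0 by simp
    ultimately show ?thesis by linarith
  qed
qed

lemma Gf_le:
  fixes t L h0 :: real and d J :: nat
  assumes t: "t \<ge> 0" and h0: "h0 \<ge> 1" and L: "L > 0" "L \<le> 2^J"
  shows "Gf d L t \<le> (1 + (12*h0)^d) / L^d + (\<Sum>j\<le>J. ((24*2^j*h0)^d / L^d) * indicator {2^j*h0<..} t)"
proof -
  have Ld: "L^d > 0" using L by simp
  have g: "gfun d L (t+1) = min (L^d) ((6*(t+1))^d) / L^d"
    unfolding gfun_def using Ld L by (simp add: min_divide_distrib_right power_divide)
  have "Gf d L t = max (min (L^d) ((6*(t+1))^d) / L^d) (1 / L^d)" by (simp add: Gf_def g)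
  also have "\<dots> \<le> (1 + min (L^d) ((6*(t+1))^d)) / L^d"
    using Ld t by (auto simp: divide_right_mono max_def intro: divide_right_mono)
  also have "\<dots> \<le> (1 + ((12*h0)^d + (\<Sum>j\<le>J. (24*2^j*h0)^d * indicator {2^j*h0<..} t))) / L^d"
    using M_bound[OF t h0 L] Ld by (intro divide_right_mono) auto
  also have "\<dots> = (1 + (12*h0)^d) / L^d + (\<Sum>j\<le>J. ((24*2^j*h0)^d / L^d) * indicator {2^j*h0<..} t)"
    by (simp only: add_divide_distrib sum_divide_distrib times_divide_eq_left add.assoc)
  finally show ?thesis .
qed

context chainsetup begin

lemma EG_bound:
  fixes h0 C :: real and J :: nat
  assumes L2: "L \<le> 2^J" and neg: "emeasure \<mu> {..<0} = 0" and h0: "h0 \<ge> 1" and C: "C \<ge> 0"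
    and tail: "\<And>h. h \<ge> h0 \<Longrightarrow> measure \<mu> {h<..} \<le> C / h^d"
  shows "(\<integral>\<^sup>+t. ennreal (Gf d L t) \<partial>\<mu>) \<le> ennreal ((1 + (12*h0)^d + real (Suc J) * 24^d * C) / L^d)"
proof -
  interpret mu: prob_space \<mu> by (rule mu_prob)
  have Ld: "L^d > 0" using Lpos by simp
  define a where "a j = (24*2^j*h0)^d / L^d" for j :: nat
  define c0 where "c0 = (1 + (12*h0)^d) / L^d"
  have a0: "a j \<ge> 0" for j using h0 Ld by (simp add: a_def)
  have c00: "c0 \<ge> 0" using h0 Ld by (simp add: c0_def)
  have sets: "{h<..} \<in> sets \<mu>" "{..<0::real} \<in> sets \<mu>" for h :: real using mu_sets by auto
  have AE: "AE t in \<mu>. t \<ge> 0"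
  proof -
    have "AE t in \<mu>. t \<notin> {..<0}" using neg sets(2) by (intro AE_not_in) (simp add: null_sets_def)
    thus ?thesis by (auto simp: not_less)
  qed
  have "(\<integral>\<^sup>+t. ennreal (Gf d L t) \<partial>\<mu>) \<le> (\<integral>\<^sup>+t. (ennreal c0 + (\<Sum>j\<le>J. ennreal (a j) * indicator {2^j*h0<..} t)) \<partial>\<mu>)"
  proof (rule nn_integral_mono_AE)
    show "AE t in \<mu>. ennreal (Gf d L t) \<le> ennreal c0 + (\<Sum>j\<le>J. ennreal (a j) * indicator {2^j*h0<..} t)"
      using AE
    proof eventually_elim
      fix t :: real assume t: "t \<ge> 0"
      have "ennreal (Gf d L t) \<le> ennreal (c0 + (\<Sum>j\<le>J. a j * indicator {2^j*h0<..} t))"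
        using Gf_le[OF t h0 Lpos L2, of d] unfolding a_def c0_def by (intro ennreal_leI) simp
      also have "\<dots> = ennreal c0 + ennreal (\<Sum>j\<le>J. a j * indicator {2^j*h0<..} t)"
        using a0 c00 by (intro ennreal_plus) (auto intro!: sum_nonneg)
      also have "ennreal (\<Sum>j\<le>J. a j * indicator {2^j*h0<..} t) = (\<Sum>j\<le>J. ennreal (a j * indicator {2^j*h0<..} t))"
        using a0 by (intro sum_ennreal[symmetric]) auto
      also have "\<dots> = (\<Sum>j\<le>J. ennreal (a j) * indicator {2^j*h0<..} t)"
        using a0 by (intro sum.cong refl) (simp add: ennreal_mult' ennreal_indicator)
      finally show "ennreal (Gf d L t) \<le> ennreal c0 + (\<Sum>j\<le>J. ennreal (a j) * indicator {2^j*h0<..} t)" .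
    qed
  qed
  also have "\<dots> = ennreal c0 + (\<Sum>j\<le>J. ennreal (a j) * emeasure \<mu> {2^j*h0<..})"
  proof -
    have "(\<integral>\<^sup>+t. (ennreal c0 + (\<Sum>j\<le>J. ennreal (a j) * indicator {2^j*h0<..} t)) \<partial>\<mu>)
        = (\<integral>\<^sup>+t. ennreal c0 \<partial>\<mu>) + (\<integral>\<^sup>+t. (\<Sum>j\<le>J. ennreal (a j) * indicator {2^j*h0<..} t) \<partial>\<mu>)"
    proof (rule nn_integral_add)
      show "(\<lambda>t. \<Sum>j\<le>J. ennreal (a j) * indicator {2^j*h0<..} t) \<in> borel_measurable \<mu>"
        by (subst measurable_cong_sets[OF mu_sets refl]) measurable
    qed simp
    also have "(\<integral>\<^sup>+t. (\<Sum>j\<le>J. ennreal (a j) * indicator {2^j*h0<..} t) \<partial>\<mu>) = (\<Sum>j\<le>J. (\<integral>\<^sup>+t. ennreal (a j) * indicator {2^j*h0<..} t \<partial>\<mu>))"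
      by (rule nn_integral_sum) (use sets in auto)
    also have "\<dots> = (\<Sum>j\<le>J. ennreal (a j) * emeasure \<mu> {2^j*h0<..})"
      by (intro sum.cong refl nn_integral_cmult_indicator) (use sets in auto)
    finally show ?thesis by (simp add: mu.emeasure_space_1)
  qed
  also have "\<dots> \<le> ennreal c0 + (\<Sum>j\<le>J. ennreal (24^d * C / L^d))"
  proof (intro add_left_mono sum_mono)
    fix j assume "j \<in> {..J}"
    have hj: "2^j*h0 \<ge> h0" using h0 by (simp add: mult_le_cancel_right1 one_le_power)
    have hpos: "2^j*h0 > 0" using h0 by simp
    have "emeasure \<mu> {2^j*h0<..} = ennreal (measure \<mu> {2^j*h0<..})" by (simp add: mu.emeasure_eq_measure)
    also have "\<dots> \<le> ennreal (C / (2^j*h0)^d)" by (intro ennreal_leI tail hj)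
    finally have "ennreal (a j) * emeasure \<mu> {2^j*h0<..} \<le> ennreal (a j) * ennreal (C / (2^j*h0)^d)"
      by (rule mult_left_mono) simp
    also have "\<dots> = ennreal (a j * (C / (2^j*h0)^d))" by (rule ennreal_mult'[OF a0, symmetric])
    also have "a j * (C / (2^j*h0)^d) = 24^d * C / L^d"
      unfolding a_def using hpos Ld h0 by (simp add: power_mult_distrib field_simps)
    finally show "ennreal (a j) * emeasure \<mu> {2^j*h0<..} \<le> ennreal (24^d * C / L^d)" .
  qed
  also have "\<dots> = ennreal ((1 + (12*h0)^d + real (Suc J) * 24^d * C) / L^d)"
  proof -
    have x0: "0 \<le> 24^d * C / L^d" using C Ld by simp
    have "(\<Sum>j\<le>J. ennreal (24^d * C / L^d)) = ennreal (\<Sum>j\<le>J. 24^d * C / L^d)"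
      by (rule sum_ennreal) (use x0 in auto)
    also have "(\<Sum>j\<le>J. 24^d * C / L^d) = real (Suc J) * (24^d * C / L^d)" by simp
    finally have "ennreal c0 + (\<Sum>j\<le>J. ennreal (24^d * C / L^d)) = ennreal c0 + ennreal (real (Suc J) * (24^d * C / L^d))"
      by simp
    also have "\<dots> = ennreal (c0 + real (Suc J) * (24^d * C / L^d))"
      by (rule ennreal_plus[symmetric]) (use c00 C Ld in simp_all)
    also have "c0 + real (Suc J) * (24^d * C / L^d) = (1 + (12*h0)^d + real (Suc J) * 24^d * C) / L^d"
      unfolding c0_def by (simp add: add_divide_distrib)
    finally show ?thesis .
  qed
  finally show ?thesis .
qed

end


lemma tail_bound:
  fixes \<mu> :: "real measure" and \<beta> :: real and d :: nat
  assumes lim: "((\<lambda>h. h powr real d * measure \<mu> {h<..}) \<longlongrightarrow> \<beta>) at_top"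
  shows "\<exists>h0\<ge>1. \<forall>h\<ge>h0. measure \<mu> {h<..} \<le> (\<bar>\<beta>\<bar> + 1) / h^d"
proof -
  have "eventually (\<lambda>h. h powr real d * measure \<mu> {h<..} < \<beta> + 1) at_top"
    using order_tendstoD(2)[OF lim, of "\<beta> + 1"] by simp
  then obtain h1 where h1: "\<And>h. h \<ge> h1 \<Longrightarrow> h powr real d * measure \<mu> {h<..} < \<beta> + 1"
    by (auto simp: eventually_at_top_linorder)
  define h0 where "h0 = max 1 h1"
  have "\<forall>h\<ge>h0. measure \<mu> {h<..} \<le> (\<bar>\<beta>\<bar> + 1) / h^d"
  proof (intro allI impI)
    fix h assume h: "h \<ge> h0"
    hence hpos: "h > 0" and hh1: "h \<ge> h1" by (auto simp: h0_def)
    have "h^d * measure \<mu> {h<..} \<le> \<bar>\<beta>\<bar> + 1"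
      using h1[OF hh1] hpos by (simp add: powr_realpow)
    thus "measure \<mu> {h<..} \<le> (\<bar>\<beta>\<bar> + 1) / h^d"
      using hpos by (simp add: field_simps)
  qed
  thus ?thesis by (intro exI[of _ h0]) (auto simp: h0_def)
qed

lemma J_bounds:
  fixes L :: real assumes L: "L \<ge> 1"
  shows "L \<le> 2 ^ nat \<lceil>log 2 L\<rceil>" "real (Suc (nat \<lceil>log 2 L\<rceil>)) \<le> ln L / ln 2 + 2"
proof -
  have lg: "log 2 L \<ge> 0" using L by simp
  have "L = 2 powr (log 2 L)" using L by simp
  also have "\<dots> \<le> 2 powr (real (nat \<lceil>log 2 L\<rceil>))" using lg by (intro powr_mono) linarith+
  also have "\<dots> = 2 ^ nat \<lceil>log 2 L\<rceil>" by (simp add: powr_realpow)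
  finally show "L \<le> 2 ^ nat \<lceil>log 2 L\<rceil>" .
  have "real (nat \<lceil>log 2 L\<rceil>) \<le> log 2 L + 1" using lg by linarith
  thus "real (Suc (nat \<lceil>log 2 L\<rceil>)) \<le> ln L / ln 2 + 2" by (simp add: log_def)
qed

lemma n_bound:
  fixes \<mu> :: "real measure" and h0 C c :: real and n m0 :: nat
  assumes mu: "prob_space \<mu>" "sets \<mu> = sets borel" "emeasure \<mu> {..<0} = 0"
    and h0: "h0 \<ge> 1" and C: "C \<ge> 0"
    and tail: "\<And>h. h \<ge> h0 \<Longrightarrow> measure \<mu> {h<..} \<le> C / h^CARD('d::finite)"
    and n: "n \<ge> 1" and m0: "m0 \<ge> 1" and hm: "\<And>m. real m > c * ln (real n) \<Longrightarrow> m0 \<le> m"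
  shows "0 \<le> prob_long_chain TYPE('d) \<mu> n c \<and> prob_long_chain TYPE('d) \<mu> n c \<le>
     real n ^ CARD('d) * ((1 + (12*h0)^CARD('d) + 2 * 24^CARD('d) * C) + (24^CARD('d) * C / ln 2) * ln (real n)) ^ m0 / fact m0"
proof -
  define D where "D = CARD('d)"
  define L where "L = real n"
  define K where "K = 1 + (12*h0)^D + 2 * 24^D * C"
  define B where "B = 24^D * C / ln 2"
  have L1: "L \<ge> 1" using n by (simp add: L_def)
  interpret chainsetup L \<mu> by (intro chainsetup.intro) (use mu L1 in simp_all)
  have LD: "L^D > 0" using L1 by simp
  define X where "X = (K + B * ln L) / L^D"
  have K0: "K \<ge> 0" using h0 C by (simp add: K_def)
  have B0: "B \<ge> 0" using C by (simp add: B_def)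
  have lnL: "ln L \<ge> 0" using L1 by simp
  have X0: "X \<ge> 0" using K0 B0 lnL LD by (simp add: X_def)
  define J where "J = nat \<lceil>log 2 L\<rceil>"
  have EG: "(\<integral>\<^sup>+t. ennreal (Gf D L t) \<partial>\<mu>) \<le> ennreal X"
  proof -
    have "(\<integral>\<^sup>+t. ennreal (Gf D L t) \<partial>\<mu>) \<le> ennreal ((1 + (12*h0)^D + real (Suc J) * 24^D * C) / L^D)"
      by (rule EG_bound) (use J_bounds[OF L1] mu h0 C tail in \<open>auto simp: J_def D_def\<close>)
    also have "\<dots> \<le> ennreal X"
    proof -
      have "real (Suc J) * (24^D * C) \<le> (ln L / ln 2 + 2) * (24^D * C)"
        using J_bounds(2)[OF L1] C by (intro mult_right_mono) (auto simp: J_def)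
      hence num: "1 + (12*h0)^D + real (Suc J) * 24^D * C \<le> K + B * ln L"
        by (simp add: K_def B_def algebra_simps)
      show ?thesis unfolding X_def using num LD by (intro ennreal_leI divide_right_mono) auto
    qed
    finally show ?thesis .
  qed
  define a where "a k = exp (- (real n ^ CARD('d))) * (real n ^ CARD('d)) ^ k / fact k *
        measure (PiM {..<k} (\<lambda>_. mark_point_law (real n) \<mu> :: ((real^'d) \<times> real) measure))
          {f \<in> space (PiM {..<k} (\<lambda>_. mark_point_law (real n) \<mu> :: ((real^'d) \<times> real) measure)).
             \<exists>m. real m > c * ln (real n) \<and> has_desc_chain (real n) f k m}" for k
  define b where "b k = exp (- (L^D)) * (L^D) ^ k / fact k * (real (k choose m0) * (L^D * X^m0))" for k
  have meas_le: "measure (PiM {..<k} (\<lambda>_. mark_point_law (real n) \<mu> :: ((real^'d) \<times> real) measure))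
          {f \<in> space (PiM {..<k} (\<lambda>_. mark_point_law (real n) \<mu> :: ((real^'d) \<times> real) measure)).
             \<exists>m. real m > c * ln (real n) \<and> has_desc_chain (real n) f k m} \<le> real (k choose m0) * (L^D * X^m0)" for k
  proof -
    have "emeasure (PiM {..<k} (\<lambda>_. Q :: ((real^'d) \<times> real) measure))
          {f \<in> space (PiM {..<k} (\<lambda>_. Q :: ((real^'d) \<times> real) measure)). \<exists>m. real m > c * ln (real n) \<and> has_desc_chain L f k m}
        \<le> of_nat (k choose m0) * ennreal (L^D) * (\<integral>\<^sup>+t. ennreal (Gf D L t) \<partial>\<mu>)^m0"
      unfolding D_def by (rule fixed_k[OF m0 hm])
    also have "\<dots> \<le> of_nat (k choose m0) * ennreal (L^D) * (ennreal X)^m0"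
      by (intro mult_left_mono power_mono_ennreal EG) auto
    also have "\<dots> = ennreal (real (k choose m0) * (L^D * X^m0))"
      using LD X0 by (simp add: ennreal_power ennreal_mult' ennreal_of_nat_eq_real_of_nat mult_ac)
    finally have le: "emeasure (PiM {..<k} (\<lambda>_. Q :: ((real^'d) \<times> real) measure))
          {f \<in> space (PiM {..<k} (\<lambda>_. Q :: ((real^'d) \<times> real) measure)). \<exists>m. real m > c * ln (real n) \<and> has_desc_chain L f k m}
        \<le> ennreal (real (k choose m0) * (L^D * X^m0))" .
    have "measure (PiM {..<k} (\<lambda>_. Q :: ((real^'d) \<times> real) measure))
          {f \<in> space (PiM {..<k} (\<lambda>_. Q :: ((real^'d) \<times> real) measure)). \<exists>m. real m > c * ln (real n) \<and> has_desc_chain L f k m}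
        \<le> enn2real (ennreal (real (k choose m0) * (L^D * X^m0)))"
      unfolding measure_def by (rule enn2real_mono[OF le]) simp
    also have "\<dots> = real (k choose m0) * (L^D * X^m0)" using LD X0 by simp
    finally show ?thesis by (simp add: L_def)
  qed
  have a0: "a k \<ge> 0" for k by (simp add: a_def)
  have ab: "a k \<le> b k" for k
    using meas_le[of k] unfolding a_def b_def L_def D_def by (intro mult_left_mono) auto
  have bsums: "b sums ((L^D) ^ m0 / fact m0 * (L^D * X^m0))"
    unfolding b_def by (rule pois_sums)
  have suma: "summable a"
    by (rule summable_comparison_test[OF _ sums_summable[OF bsums]]) (use a0 ab in auto)
  have pa: "prob_long_chain TYPE('d) \<mu> n c = suminf a" unfolding prob_long_chain_def a_def by (rule refl)
  have nonneg: "0 \<le> prob_long_chain TYPE('d) \<mu> n c" unfolding pa by (rule suminf_nonneg[OF suma a0])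
  have "prob_long_chain TYPE('d) \<mu> n c = suminf a" by (rule pa)
  also have "\<dots> \<le> suminf b" by (rule suminf_le[OF ab suma sums_summable[OF bsums]])
  also have "\<dots> = (L^D) ^ m0 / fact m0 * (L^D * X^m0)" using bsums by (rule sums_unique[symmetric])
  also have "\<dots> = L^D * (L^D * X)^m0 / fact m0" by (simp add: power_mult_distrib)
  also have "L^D * X = K + B * ln L" using LD L1 by (simp add: X_def)
  finally show ?thesis using nonneg by (simp add: L_def D_def K_def B_def)
qed

theorem lemma5p3:
  fixes \<mu> :: "real measure" and \<beta> :: real
  assumes "CARD('d::finite) \<ge> 2"
    and "prob_space \<mu>"
    and "sets \<mu> = sets borel"
    and "emeasure \<mu> {..<0} = 0"
    and "absolutely_continuous lborel \<mu>"
    and "\<beta> > 0"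
    and "((\<lambda>h. h powr real CARD('d) * measure \<mu> {h<..}) \<longlongrightarrow> \<beta>) at_top"
  shows "\<exists>c1>0. (\<lambda>n. prob_long_chain TYPE('d) \<mu> n c1) \<longlonglongrightarrow> 0"
proof -
  define D where "D = CARD('d)"
  define C where "C = \<bar>\<beta>\<bar> + 1"
  obtain h0 where h0: "h0 \<ge> 1" and tail: "\<And>h. h \<ge> h0 \<Longrightarrow> measure \<mu> {h<..} \<le> C / h^D"
    using tail_bound[OF assms(7)] unfolding C_def D_def by blast
  have C0: "C > 0" by (simp add: C_def)
  define K where "K = 1 + (12*h0)^D + 2 * 24^D * C"
  define B where "B = 24^D * C / ln 2"
  have B0: "B > 0" using C0 by (simp add: B_def)
  obtain c where c: "c > 0" and ev: "\<forall>\<^sub>F n in sequentially. \<forall>m::nat. real m > c * ln (real n) \<longrightarrow>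
            real n ^ D * (K + B * ln (real n)) ^ m / fact m \<le> 1 / real n \<and>
            0 \<le> real n ^ D * (K + B * ln (real n)) ^ m / fact m"
    using asymp_bound[OF B0, where K=K and d=D] by blast
  have bnd: "\<forall>\<^sub>F n in sequentially. 0 \<le> prob_long_chain TYPE('d) \<mu> n c \<and> prob_long_chain TYPE('d) \<mu> n c \<le> 1 / real n"
    using ev eventually_ge_at_top[of "1::nat"]
  proof eventually_elim
    case (elim n)
    define m0 where "m0 = nat \<lfloor>c * ln (real n)\<rfloor> + 1"
    have x0: "c * ln (real n) \<ge> 0" using c elim(2) by simp
    have m0_gt: "real m0 > c * ln (real n)" unfolding m0_def using x0 by linarith
    have hm: "m0 \<le> m" if "real m > c * ln (real n)" for m
    proof -
      have "\<lfloor>c * ln (real n)\<rfloor> < int m" using that by linarith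
      moreover have "0 \<le> \<lfloor>c * ln (real n)\<rfloor>" using x0 by simp
      ultimately have "nat \<lfloor>c * ln (real n)\<rfloor> < m" by (simp add: nat_less_iff)
      thus ?thesis unfolding m0_def by simp
    qed
    have nb: "0 \<le> prob_long_chain TYPE('d) \<mu> n c \<and> prob_long_chain TYPE('d) \<mu> n c \<le>
     real n ^ CARD('d) * ((1 + (12*h0)^CARD('d) + 2 * 24^CARD('d) * C) + (24^CARD('d) * C / ln 2) * ln (real n)) ^ m0 / fact m0"
      by (rule n_bound[OF assms(2,3,4) h0 less_imp_le[OF C0] tail[unfolded D_def] elim(2) _ hm]) (auto simp: m0_def)
    have "real n ^ D * (K + B * ln (real n)) ^ m0 / fact m0 \<le> 1 / real n"
      using elim(1) m0_gt by blast
    thus ?case using nb by (simp add: K_def B_def D_def)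
  qed
  have "(\<lambda>n. prob_long_chain TYPE('d) \<mu> n c) \<longlonglongrightarrow> 0"
  proof (rule tendsto_sandwich[of "\<lambda>_. 0" _ _ "\<lambda>n. 1 / real n"])
    show "\<forall>\<^sub>F n in sequentially. 0 \<le> prob_long_chain TYPE('d) \<mu> n c" using bnd by eventually_elim auto
    show "\<forall>\<^sub>F n in sequentially. prob_long_chain TYPE('d) \<mu> n c \<le> 1 / real n" using bnd by eventually_elim auto
    show "(\<lambda>n. 1 / real n) \<longlonglongrightarrow> 0" by (rule lim_1_over_n)
  qed simp
  thus ?thesis using c by blast
qed


end
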